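(* Let $H=\bigcup_i K_{n_i}$ be a disjoint union of complete graphs with all $n_i\ge 1$. Then for every connected graph $G$, $\mathrm{gp}(G\odot H)=\omega((G\odot H)_{\rm SR})$.
   Context: All graphs are finite and simple. For a connected graph $G$, $d_G(u,v)$ is the distance, and a geodesic is a shortest path. A set $S\subseteq V(G)$ is a general position set if no three pairwise distinct vertices of $S$ lie on a common geodesic; $\mathrm{gp}(G)$ is the maximum cardinality of a general position set. A vertex $u$ is maximally distant from $v$ if every neighbor $w$ of $u$ satisfies $d_G(v,w)\le d_G(u,v)$; $u,v$ are mutually maximally distant (MMD) if each is maximally distant from the other. The strong resolving graph $G_{\rm SR}$ has vertex set $V(G)$, distinct vertices adjacent iff MMD in $G$. $\omega$ is the clique number. The corona $G\odot H$, for $V(G)=\{v_1,\dots,v_n\}$, is obtained from the disjoint union of $G$ and $n$ disjoint copies $H_1,\dots,H_n$ of $H$ by joining $v_i$ to every vertex of $H_i$, for each $i$. *)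

theory Defs
  imports Main
begin

definition simple_graph :: "'a set \<Rightarrow> ('a \<Rightarrow> 'a \<Rightarrow> bool) \<Rightarrow> bool" where
  "simple_graph V E \<longleftrightarrow> finite V \<and>
     (\<forall>x y. E x y \<longrightarrow> x \<in> V \<and> y \<in> V \<and> x \<noteq> y \<and> E y x)"

definition walk :: "'a set \<Rightarrow> ('a \<Rightarrow> 'a \<Rightarrow> bool) \<Rightarrow> 'a list \<Rightarrow> bool" where
  "walk V E xs \<longleftrightarrow> xs \<noteq> [] \<and> set xs \<subseteq> V \<and>
     (\<forall>i. Suc i < length xs \<longrightarrow> E (xs ! i) (xs ! Suc i))"

definition connected_graph :: "'a set \<Rightarrow> ('a \<Rightarrow> 'a \<Rightarrow> bool) \<Rightarrow> bool" where
  "connected_graph V E \<longleftrightarrow> V \<noteq> {} \<and>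
     (\<forall>u\<in>V. \<forall>v\<in>V. \<exists>xs. walk V E xs \<and> hd xs = u \<and> last xs = v)"

definition gdist :: "'a set \<Rightarrow> ('a \<Rightarrow> 'a \<Rightarrow> bool) \<Rightarrow> 'a \<Rightarrow> 'a \<Rightarrow> nat" where
  "gdist V E u v = (LEAST n. \<exists>xs. walk V E xs \<and> hd xs = u \<and> last xs = v \<and> length xs = Suc n)"

definition geodesic :: "'a set \<Rightarrow> ('a \<Rightarrow> 'a \<Rightarrow> bool) \<Rightarrow> 'a list \<Rightarrow> bool" where
  "geodesic V E xs \<longleftrightarrow> walk V E xs \<and> length xs = Suc (gdist V E (hd xs) (last xs))"

definition gp_set :: "'a set \<Rightarrow> ('a \<Rightarrow> 'a \<Rightarrow> bool) \<Rightarrow> 'a set \<Rightarrow> bool" where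
  "gp_set V E S \<longleftrightarrow> S \<subseteq> V \<and>
     (\<forall>u\<in>S. \<forall>v\<in>S. \<forall>w\<in>S. u \<noteq> v \<and> u \<noteq> w \<and> v \<noteq> w \<longrightarrow>
        \<not> (\<exists>xs. geodesic V E xs \<and> u \<in> set xs \<and> v \<in> set xs \<and> w \<in> set xs))"

definition gp_number :: "'a set \<Rightarrow> ('a \<Rightarrow> 'a \<Rightarrow> bool) \<Rightarrow> nat" where
  "gp_number V E = Max {card S | S. gp_set V E S}"

definition maximally_distant :: "'a set \<Rightarrow> ('a \<Rightarrow> 'a \<Rightarrow> bool) \<Rightarrow> 'a \<Rightarrow> 'a \<Rightarrow> bool" where
  "maximally_distant V E u v \<longleftrightarrow> u \<in> V \<and> v \<in> V \<and>
     (\<forall>w\<in>V. E u w \<longrightarrow> gdist V E v w \<le> gdist V E u v)"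

definition mutually_maximally_distant :: "'a set \<Rightarrow> ('a \<Rightarrow> 'a \<Rightarrow> bool) \<Rightarrow> 'a \<Rightarrow> 'a \<Rightarrow> bool" where
  "mutually_maximally_distant V E u v \<longleftrightarrow>
     maximally_distant V E u v \<and> maximally_distant V E v u"

text \<open>Edge relation of the strong resolving graph (vertex set is V itself).\<close>
definition strong_resolving_edges :: "'a set \<Rightarrow> ('a \<Rightarrow> 'a \<Rightarrow> bool) \<Rightarrow> 'a \<Rightarrow> 'a \<Rightarrow> bool" where
  "strong_resolving_edges V E u v \<longleftrightarrow> u \<noteq> v \<and> mutually_maximally_distant V E u v"

definition clique :: "'a set \<Rightarrow> ('a \<Rightarrow> 'a \<Rightarrow> bool) \<Rightarrow> 'a set \<Rightarrow> bool" where
  "clique V E S \<longleftrightarrow> S \<subseteq> V \<and> (\<forall>u\<in>S. \<forall>v\<in>S. u \<noteq> v \<longrightarrow> E u v)"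

definition clique_number :: "'a set \<Rightarrow> ('a \<Rightarrow> 'a \<Rightarrow> bool) \<Rightarrow> nat" where
  "clique_number V E = Max {card S | S. clique V E S}"

text \<open>Corona product G \<odot> H: vertex Inl v is v in G, vertex Inr (v, x) is the copy of x
in the copy H_v of H attached to v.\<close>
definition corona_vertices :: "'a set \<Rightarrow> 'b set \<Rightarrow> ('a + 'a \<times> 'b) set" where
  "corona_vertices VG VH = Inl ` VG \<union> Inr ` (VG \<times> VH)"

fun corona_edges :: "('a \<Rightarrow> 'a \<Rightarrow> bool) \<Rightarrow> ('b \<Rightarrow> 'b \<Rightarrow> bool)
    \<Rightarrow> ('a + 'a \<times> 'b) \<Rightarrow> ('a + 'a \<times> 'b) \<Rightarrow> bool" where
  "corona_edges EG EH (Inl a) (Inl b) = EG a b"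
| "corona_edges EG EH (Inr (a, x)) (Inr (b, y)) = (a = b \<and> EH x y)"
| "corona_edges EG EH (Inl a) (Inr (b, y)) = (a = b)"
| "corona_edges EG EH (Inr (a, x)) (Inl b) = (a = b)"

definition disjoint_union_of_complete_graphs :: "'b set \<Rightarrow> ('b \<Rightarrow> 'b \<Rightarrow> bool) \<Rightarrow> bool" where
  "disjoint_union_of_complete_graphs V E \<longleftrightarrow> finite V \<and> V \<noteq> {} \<and>
     (\<exists>P. (\<forall>B\<in>P. B \<noteq> {}) \<and> \<Union>P = V \<and>
          (\<forall>B\<in>P. \<forall>C\<in>P. B \<noteq> C \<longrightarrow> B \<inter> C = {}) \<and>
          (\<forall>x y. E x y \<longleftrightarrow> x \<noteq> y \<and> (\<exists>B\<in>P. x \<in> B \<and> y \<in> B)))"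

end

theory Submission
  imports Defs
begin


lemma walk_single[simp]: "walk V E [a] \<longleftrightarrow> a \<in> V"
  by (auto simp: walk_def)

lemma walk_nonempty: "walk V E xs \<Longrightarrow> xs \<noteq> []"
  by (simp add: walk_def)

lemma walk_Cons_Cons: "walk V E (a#b#xs) \<longleftrightarrow> a \<in> V \<and> E a b \<and> walk V E (b#xs)"
proof
  assume h: "walk V E (a#b#xs)"
  have "\<forall>i. Suc i < length (b#xs) \<longrightarrow> E ((b#xs) ! i) ((b#xs) ! Suc i)"
  proof (intro allI impI)
    fix i assume "Suc i < length (b#xs)"
    then have "Suc (Suc i) < length (a#b#xs)" by simp
    with h have "E ((a#b#xs) ! Suc i) ((a#b#xs) ! Suc (Suc i))" unfolding walk_def by blast
    then show "E ((b#xs) ! i) ((b#xs) ! Suc i)" by simp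
  qed
  moreover have "E a b" using h unfolding walk_def by (metis length_Cons nth_Cons_0 nth_Cons_Suc zero_less_Suc Suc_less_eq)
  ultimately show "a \<in> V \<and> E a b \<and> walk V E (b#xs)" using h unfolding walk_def by auto
next
  assume h: "a \<in> V \<and> E a b \<and> walk V E (b#xs)"
  have "\<forall>i. Suc i < length (a#b#xs) \<longrightarrow> E ((a#b#xs) ! i) ((a#b#xs) ! Suc i)"
  proof (intro allI impI)
    fix i assume i: "Suc i < length (a#b#xs)"
    show "E ((a#b#xs) ! i) ((a#b#xs) ! Suc i)"
    proof (cases i)
      case 0 then show ?thesis using h by simp
    next
      case (Suc j) then show ?thesis using h i unfolding walk_def by auto
    qed
  qed
  then show "walk V E (a#b#xs)" using h unfolding walk_def by auto
qed

lemma walk_append: "xs \<noteq> [] \<Longrightarrow> ys \<noteq> [] \<Longrightarrow>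
   walk V E (xs @ ys) \<longleftrightarrow> walk V E xs \<and> walk V E ys \<and> E (last xs) (hd ys)"
proof (induction xs)
  case Nil then show ?case by simp
next
  case (Cons a xs)
  show ?case
  proof (cases xs)
    case Nil
    obtain b ys' where "ys = b # ys'" using Cons.prems by (cases ys) auto
    then show ?thesis using Nil by (auto simp: walk_Cons_Cons)
  next
    case (Cons b xs')
    then show ?thesis using Cons.IH Cons.prems by (auto simp: walk_Cons_Cons)
  qed
qed

lemma walk_rev: assumes sym: "\<And>a b. E a b \<Longrightarrow> E b a"
  shows "walk V E xs \<Longrightarrow> walk V E (rev xs)"
proof (induction xs)
  case Nil then show ?case by (simp add: walk_def)
next
  case (Cons a xs)
  note IH = Cons.IH and prems = Cons.prems
  show ?case
  proof (cases xs)
    case Nil then show ?thesis using prems by simp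
  next
    case (Cons b xs')
    note Cons1 = this
    then have "walk V E xs" "E a b" "a \<in> V" using prems by (auto simp: walk_Cons_Cons)
    then have "walk V E (rev xs)" using IH by simp
    moreover have "last (rev xs) = b" using Cons1 by simp
    ultimately show ?thesis using walk_append[of "rev xs" "[a]" V E] \<open>E a b\<close> sym \<open>a \<in> V\<close> Cons1 by auto
  qed
qed

lemma gdist_le: "walk V E xs \<Longrightarrow> hd xs = a \<Longrightarrow> last xs = b \<Longrightarrow> gdist V E a b < length xs"
proof -
  assume h: "walk V E xs" "hd xs = a" "last xs = b"
  then have "xs \<noteq> []" using walk_nonempty by blast
  then have l: "length xs = Suc (length xs - 1)" by (cases xs) auto
  have "gdist V E a b \<le> length xs - 1" unfolding gdist_def
    by (rule Least_le) (use h l in blast)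
  then show ?thesis using l by linarith
qed

lemma gdist_ex: "walk V E xs \<Longrightarrow> hd xs = a \<Longrightarrow> last xs = b \<Longrightarrow>
   \<exists>ys. walk V E ys \<and> hd ys = a \<and> last ys = b \<and> length ys = Suc (gdist V E a b)"
proof -
  assume h: "walk V E xs" "hd xs = a" "last xs = b"
  then have "xs \<noteq> []" using walk_nonempty by blast
  then have l: "length xs = Suc (length xs - 1)" by (cases xs) auto
  show ?thesis unfolding gdist_def
    by (rule LeastI_ex) (use h l in blast)
qed

lemma conn_walk: "connected_graph V E \<Longrightarrow> a \<in> V \<Longrightarrow> b \<in> V \<Longrightarrow>
   \<exists>xs. walk V E xs \<and> hd xs = a \<and> last xs = b"
  unfolding connected_graph_def by blast

lemma gdist_ex2: "connected_graph V E \<Longrightarrow> a \<in> V \<Longrightarrow> b \<in> V \<Longrightarrow>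
   \<exists>ys. walk V E ys \<and> hd ys = a \<and> last ys = b \<and> length ys = Suc (gdist V E a b)"
  using conn_walk gdist_ex by metis

lemma gdist_sym_le: assumes sym: "\<And>a b. E a b \<Longrightarrow> E b a" and c: "connected_graph V E"
  and ab: "a \<in> V" "b \<in> V" shows "gdist V E a b \<le> gdist V E b a"
proof -
  obtain ys where ys: "walk V E ys" "hd ys = b" "last ys = a" "length ys = Suc (gdist V E b a)"
    using gdist_ex2[OF c ab(2) ab(1)] by blast
  have "walk V E (rev ys)" using walk_rev[where E=E, OF sym] ys by blast
  moreover have "ys \<noteq> []" using ys walk_nonempty by blast
  ultimately have "gdist V E a b < length (rev ys)" using gdist_le ys by (metis hd_rev last_rev)
  then show ?thesis using ys by simp
qed

lemma gdist_sym: assumes sym: "\<And>a b. E a b \<Longrightarrow> E b a" and c: "connected_graph V E"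
  and ab: "a \<in> V" "b \<in> V" shows "gdist V E a b = gdist V E b a"
  using gdist_sym_le[OF sym c ab] gdist_sym_le[OF sym c ab(2) ab(1)] by simp

lemma gdist_le1: assumes c: "connected_graph V E" and ab: "a \<in> V" "b \<in> V"
  and d: "gdist V E a b \<le> 1" shows "a = b \<or> E a b"
proof -
  obtain ys where ys: "walk V E ys" "hd ys = a" "last ys = b" "length ys = Suc (gdist V E a b)"
    using gdist_ex2[OF c ab] by blast
  show ?thesis
  proof (cases "gdist V E a b")
    case 0 then obtain c where "ys = [c]" using ys by (cases ys) auto
    then show ?thesis using ys by simp
  next
    case (Suc k) then have "k = 0" using d by simp
    then obtain c1 c2 where "ys = [c1, c2]" using ys Suc
      by (cases ys; cases "tl ys") auto
    then show ?thesis using ys by (simp add: walk_Cons_Cons)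
  qed
qed

lemma merge: "walk V E p \<Longrightarrow> walk V E q \<Longrightarrow> last p = hd q \<Longrightarrow>
  walk V E (p @ tl q) \<and> hd (p @ tl q) = hd p \<and> last (p @ tl q) = last q \<and>
  length (p @ tl q) = length p + length q - 1"
proof -
  assume h: "walk V E p" "walk V E q" "last p = hd q"
  have pn: "p \<noteq> []" and qn: "q \<noteq> []" using h walk_nonempty by blast+
  then obtain b q' where q: "q = b # q'" by (cases q) auto
  show ?thesis
  proof (cases q')
    case Nil then show ?thesis using h q pn by simp
  next
    case (Cons c q'')
    then have "walk V E q'" "E b c" using h q by (auto simp: walk_Cons_Cons)
    then have "walk V E (p @ q')" using walk_append[of p q' V E] h pn q Cons by simp
    then show ?thesis using q Cons pn by simp
  qed
qed

definition simplicial :: "'a set \<Rightarrow> ('a \<Rightarrow> 'a \<Rightarrow> bool) \<Rightarrow> 'a \<Rightarrow> bool" where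
  "simplicial V E v \<longleftrightarrow> (\<forall>a b. a \<in> V \<longrightarrow> b \<in> V \<longrightarrow> E v a \<longrightarrow> E v b \<longrightarrow> a \<noteq> b \<longrightarrow> E a b)"

lemma simplicial_not_interior:
  assumes sym: "\<And>a b. E a b \<Longrightarrow> E b a"
  and g: "geodesic V E xs" and v: "v \<in> set xs" "v \<noteq> hd xs" "v \<noteq> last xs"
  and s: "simplicial V E v"
  shows False
proof -
  obtain p q where xs: "xs = p @ v # q" using split_list[OF v(1)] by blast
  have w: "walk V E xs" and len: "length xs = Suc (gdist V E (hd xs) (last xs))"
    using g unfolding geodesic_def by auto
  have pn: "p \<noteq> []" using v xs by auto
  have qn: "q \<noteq> []" using v xs by auto
  have wp: "walk V E p" and e1: "E (last p) v" and wvq: "walk V E (v # q)"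
    using walk_append[of p "v#q" V E] w xs pn by auto
  obtain b q' where q: "q = b # q'" using qn by (cases q) auto
  have e2: "E v b" and wq: "walk V E q" using wvq q by (auto simp: walk_Cons_Cons)
  have hdx: "hd xs = hd p" using xs pn by simp
  have lx: "last xs = last q" using xs qn by simp
  have lp: "last p \<in> V" using wp pn unfolding walk_def by auto
  have bV: "b \<in> V" using wq q unfolding walk_def by auto
  show False
  proof (cases "last p = b")
    case True
    have m: "walk V E (p @ tl q) \<and> hd (p @ tl q) = hd p \<and> last (p @ tl q) = last q \<and>
      length (p @ tl q) = length p + length q - 1" using merge[OF wp wq] True q by simp
    then have "gdist V E (hd xs) (last xs) < length p + length q - 1"
      using gdist_le hdx lx by metis
    then show False using len xs by simp
  next
    case False
    then have "E (last p) b" using s e1 e2 sym lp bV unfolding simplicial_def by blast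
    then have "walk V E (p @ q)" using walk_append[of p q V E] wp wq q pn by simp
    moreover have "hd (p @ q) = hd xs" "last (p @ q) = last xs" using hdx lx pn qn by auto
    ultimately have "gdist V E (hd xs) (last xs) < length (p @ q)" using gdist_le by metis
    then show False using len xs by simp
  qed
qed

lemma three_simplicial:
  assumes sym: "\<And>a b. E a b \<Longrightarrow> E b a"
  and g: "geodesic V E xs" and in3: "u \<in> set xs" "v \<in> set xs" "w \<in> set xs"
  and d: "u \<noteq> v" "u \<noteq> w" "v \<noteq> w"
  and s: "simplicial V E u" "simplicial V E v" "simplicial V E w"
  shows False
proof -
  have "u = hd xs \<or> u = last xs" using simplicial_not_interior[OF sym g in3(1) _ _ s(1)] by blast
  moreover have "v = hd xs \<or> v = last xs" using simplicial_not_interior[OF sym g in3(2) _ _ s(2)] by blast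
  moreover have "w = hd xs \<or> w = last xs" using simplicial_not_interior[OF sym g in3(3) _ _ s(3)] by blast
  ultimately show False using d by blast
qed

lemma simplicial_md:
  assumes sym: "\<And>a b. E a b \<Longrightarrow> E b a" and c: "connected_graph V E"
  and ab: "a \<in> V" "b \<in> V" "a \<noteq> b" and s: "simplicial V E a"
  shows "maximally_distant V E a b"
  unfolding maximally_distant_def
proof (intro conjI ballI impI)
  show "a \<in> V" "b \<in> V" using ab by auto
  fix w assume wV: "w \<in> V" and aw: "E a w"
  obtain p where p: "walk V E p" "hd p = b" "last p = a" "length p = Suc (gdist V E b a)"
    using gdist_ex2[OF c ab(2) ab(1)] by blast
  have dsym: "gdist V E a b = gdist V E b a" using gdist_sym[OF sym c ab(1,2)] .
  define d where "d = gdist V E b a"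
  have "d \<noteq> 0"
  proof
    assume "d = 0"
    then have "length p = 1" using p unfolding d_def by simp
    then obtain x where "p = [x]" by (metis One_nat_def length_0_conv length_Suc_conv)
    then show False using p ab(3) by simp
  qed
  define r where "r = butlast p"
  have pr: "p = r @ [a]" using p unfolding r_def
    by (metis append_butlast_last_id list.size(3) nat.distinct(1))
  have rn: "r \<noteq> []" using \<open>d \<noteq> 0\<close> p pr unfolding d_def by auto
  have wr: "walk V E r" and e: "E (last r) a" using walk_append[of r "[a]" V E] p pr rn by auto
  have hr: "hd r = b" using p pr rn by simp
  have lr: "length r = d" using p pr unfolding d_def by simp
  have lrV: "last r \<in> V" using wr rn unfolding walk_def by auto
  show "gdist V E b w \<le> gdist V E a b"
  proof (cases "last r = w")
    case True
    then have "gdist V E b w < length r" using gdist_le wr hr by metis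
    then show ?thesis using lr dsym unfolding d_def by simp
  next
    case False
    then have "E (last r) w" using s sym e aw lrV wV unfolding simplicial_def by blast
    then have "walk V E (r @ [w])" using walk_append[of r "[w]" V E] wr rn wV by simp
    then have "gdist V E b w < length (r @ [w])" using gdist_le hr rn
      by (metis hd_append2 last_snoc)
    then show ?thesis using lr dsym unfolding d_def by simp
  qed
qed

lemma cut_walk:
  assumes cut: "\<And>a b. E a b \<Longrightarrow> b \<in> A \<Longrightarrow> a \<notin> A \<Longrightarrow> a = c"
  shows "walk V E xs \<Longrightarrow> hd xs \<notin> A \<Longrightarrow> last xs \<in> A \<Longrightarrow>
    \<exists>ys. walk V E ys \<and> hd ys = hd xs \<and> last ys = c \<and> length ys < length xs"
proof (induction xs)
  case Nil then show ?case by (simp add: walk_def)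
next
  case (Cons a xs)
  note IH = Cons.IH and prems = Cons.prems
  show ?case
  proof (cases xs)
    case Nil then show ?thesis using prems by simp
  next
    case (Cons b xs')
    note Cons1 = this
    have ab: "E a b" "a \<in> V" "walk V E xs" using prems Cons1 by (auto simp: walk_Cons_Cons)
    show ?thesis
    proof (cases "b \<in> A")
      case True
      then have "a = c" using cut ab prems by simp
      then show ?thesis using ab Cons1 by (intro exI[of _ "[a]"]) auto
    next
      case False
      then obtain ys where ys: "walk V E ys" "hd ys = b" "last ys = c" "length ys < length xs"
        using IH ab prems Cons1 by auto
      have "ys \<noteq> []" using ys walk_nonempty by blast
      then obtain ys' where "ys = b # ys'" using ys by (cases ys) auto
      then show ?thesis using ys ab by (intro exI[of _ "a # ys"]) (auto simp: walk_Cons_Cons)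
    qed
  qed
qed

lemma cut_dist:
  assumes cut: "\<And>a b. E a b \<Longrightarrow> b \<in> A \<Longrightarrow> a \<notin> A \<Longrightarrow> a = c"
  and conn: "connected_graph V E" and w: "w \<in> V" "w \<notin> A" and z: "z \<in> V" "z \<in> A"
  shows "Suc (gdist V E w c) \<le> gdist V E w z"
proof -
  obtain xs where xs: "walk V E xs" "hd xs = w" "last xs = z" "length xs = Suc (gdist V E w z)"
    using gdist_ex2[OF conn w(1) z(1)] by blast
  have "\<exists>ys. walk V E ys \<and> hd ys = hd xs \<and> last ys = c \<and> length ys < length xs"
    by (rule cut_walk[where E=E and A=A and c=c]) (use cut xs w z in auto)
  then obtain ys where "walk V E ys" "hd ys = w" "last ys = c" "length ys < length xs"
    using xs by auto
  then have "gdist V E w c < length ys" using gdist_le by metis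
  then show ?thesis using \<open>length ys < length xs\<close> xs by simp
qed

lemma cut_geod:
  assumes cut: "\<And>a b. E a b \<Longrightarrow> b \<in> A \<Longrightarrow> a \<notin> A \<Longrightarrow> a = c"
  and conn: "connected_graph V E" and w: "w \<in> V" "w \<notin> A" and z: "z \<in> V" "z \<in> A"
  and cV: "c \<in> V" and cz: "E c z"
  shows "\<exists>xs. geodesic V E xs \<and> w \<in> set xs \<and> c \<in> set xs \<and> z \<in> set xs"
proof -
  obtain ys where ys: "walk V E ys" "hd ys = w" "last ys = c" "length ys = Suc (gdist V E w c)"
    using gdist_ex2[OF conn w(1) cV] by blast
  have yn: "ys \<noteq> []" using ys walk_nonempty by blast
  have wx: "walk V E (ys @ [z])" using walk_append[of ys "[z]" V E] ys yn z cz by simp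
  have h: "hd (ys @ [z]) = w" "last (ys @ [z]) = z" using ys yn by auto
  have "gdist V E w z < length (ys @ [z])" using gdist_le[OF wx h] .
  moreover have "Suc (gdist V E w c) \<le> gdist V E w z" using cut_dist[OF cut conn w z] .
  ultimately have "length (ys @ [z]) = Suc (gdist V E w z)" using ys by simp
  then have "geodesic V E (ys @ [z])" using wx h unfolding geodesic_def by simp
  moreover have "w \<in> set (ys @ [z])" "c \<in> set (ys @ [z])" "z \<in> set (ys @ [z])"
    using ys yn by (auto intro: hd_in_set last_in_set)
  ultimately show ?thesis by blast
qed



lemma corona_sym:
  assumes sG: "simple_graph VG EG" and sH: "simple_graph VH EH"
  shows "corona_edges EG EH a b \<Longrightarrow> corona_edges EG EH b a"
  using sG sH unfolding simple_graph_def
  by (cases a; cases b) auto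

lemma corona_irrefl:
  assumes sG: "simple_graph VG EG" and sH: "simple_graph VH EH"
  shows "\<not> corona_edges EG EH a a"
proof (cases a)
  case (Inl u) then show ?thesis using sG unfolding simple_graph_def by auto
next
  case (Inr p)
  then obtain u x where "a = Inr (u, x)" by (cases p) auto
  then show ?thesis using sH unfolding simple_graph_def by auto
qed

lemma walk_map_Inl: "walk VG EG xs \<Longrightarrow> walk (corona_vertices VG VH) (corona_edges EG EH) (map Inl xs)"
  unfolding walk_def corona_vertices_def by auto

lemma to_base:
  assumes "a \<in> corona_vertices VG VH"
  shows "\<exists>u\<in>VG. \<exists>p. walk (corona_vertices VG VH) (corona_edges EG EH) p \<and> hd p = a \<and> last p = Inl u"
proof (cases a)
  case (Inl u)
  then show ?thesis using assms by (intro bexI[of _ u] exI[of _ "[a]"]) (auto simp: corona_vertices_def)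
next
  case (Inr p)
  then obtain u x where "a = Inr (u, x)" by (cases p) auto
  then show ?thesis using assms
    by (intro bexI[of _ u] exI[of _ "[a, Inl u]"]) (auto simp: corona_vertices_def walk_Cons_Cons)
qed

lemma corona_conn:
  assumes sG: "simple_graph VG EG" and sH: "simple_graph VH EH" and cG: "connected_graph VG EG"
  shows "connected_graph (corona_vertices VG VH) (corona_edges EG EH)"
proof -
  let ?V = "corona_vertices VG VH" and ?E = "corona_edges EG EH"
  have sym: "\<And>a b. ?E a b \<Longrightarrow> ?E b a" using corona_sym[OF sG sH] .
  have "VG \<noteq> {}" using cG unfolding connected_graph_def by auto
  then have ne: "?V \<noteq> {}" unfolding corona_vertices_def by auto
  have "\<exists>xs. walk ?V ?E xs \<and> hd xs = a \<and> last xs = b" if a: "a \<in> ?V" and b: "b \<in> ?V" for a b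
  proof -
    obtain u p where u: "u \<in> VG" and p: "walk ?V ?E p" "hd p = a" "last p = Inl u"
      using to_base[OF a] by blast
    obtain v q where v: "v \<in> VG" and q: "walk ?V ?E q" "hd q = b" "last q = Inl v"
      using to_base[OF b] by blast
    obtain r where r: "walk VG EG r" "hd r = u" "last r = v"
      using cG u v unfolding connected_graph_def by blast
    have rn: "r \<noteq> []" using r walk_nonempty by blast
    have r': "walk ?V ?E (map Inl r)" "hd (map Inl r) = Inl u" "last (map Inl r) = Inl v"
      using walk_map_Inl[OF r(1)] r rn by (auto simp: hd_map last_map)
    have qn: "q \<noteq> []" using q walk_nonempty by blast
    have q': "walk ?V ?E (rev q)" "hd (rev q) = Inl v" "last (rev q) = b"
      using walk_rev[where E="?E", OF sym q(1)] q qn by (auto simp: hd_rev last_rev)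
    define s where "s = p @ tl (map Inl r)"
    have "last p = hd (map Inl r)" using p(3) r'(2) by metis
    note m = merge[OF p(1) r'(1) this]
    have s: "walk ?V ?E s" "hd s = a" "last s = Inl v"
      using m p(2) r'(3) unfolding s_def by simp_all
    define t where "t = s @ tl (rev q)"
    have "last s = hd (rev q)" using s(3) q'(2) by metis
    note m2 = merge[OF s(1) q'(1) this]
    have "walk ?V ?E t" "hd t = a" "last t = b"
      using m2 s(2) q'(3) unfolding t_def by simp_all
    then show ?thesis by blast
  qed
  then show ?thesis using ne unfolding connected_graph_def by blast
qed

lemma block_trans:
  assumes dH: "disjoint_union_of_complete_graphs VH EH"
  and "EH x y" "EH x z" "y \<noteq> z" shows "EH y z"
proof -
  have "\<exists>P. (\<forall>B\<in>P. B \<noteq> {}) \<and> \<Union>P = VH \<and>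
          (\<forall>B\<in>P. \<forall>C\<in>P. B \<noteq> C \<longrightarrow> B \<inter> C = {}) \<and>
          (\<forall>x y. EH x y \<longleftrightarrow> x \<noteq> y \<and> (\<exists>B\<in>P. x \<in> B \<and> y \<in> B))"
    using dH unfolding disjoint_union_of_complete_graphs_def by (rule conjunct2[OF conjunct2])
  then obtain P where h: "(\<forall>B\<in>P. B \<noteq> {}) \<and> \<Union>P = VH \<and>
          (\<forall>B\<in>P. \<forall>C\<in>P. B \<noteq> C \<longrightarrow> B \<inter> C = {}) \<and>
          (\<forall>x y. EH x y \<longleftrightarrow> x \<noteq> y \<and> (\<exists>B\<in>P. x \<in> B \<and> y \<in> B))" by (rule exE)
  note P = conjunct1[OF conjunct2[OF conjunct2[OF h]]] conjunct2[OF conjunct2[OF conjunct2[OF h]]]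
  have eq: "EH a b \<longleftrightarrow> a \<noteq> b \<and> (\<exists>B\<in>P. a \<in> B \<and> b \<in> B)" for a b by (rule spec[OF spec[OF P(2)]])
  have "\<exists>B\<in>P. x \<in> B \<and> y \<in> B" using eq[of x y] assms(2) by simp
  then obtain B where B: "B \<in> P" "x \<in> B" "y \<in> B" by blast
  have "\<exists>C\<in>P. x \<in> C \<and> z \<in> C" using eq[of x z] assms(3) by simp
  then obtain C where C: "C \<in> P" "x \<in> C" "z \<in> C" by blast
  have "B = C"
  proof (rule ccontr)
    assume "B \<noteq> C"
    then have "B \<inter> C = {}" using P(1) B(1) C(1) by blast
    then show False using B(2) C(2) by blast
  qed
  then show ?thesis using eq[of y z] B C assms(4) by auto
qed

lemma Inr_simplicial:
  assumes dH: "disjoint_union_of_complete_graphs VH EH"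
  shows "simplicial (corona_vertices VG VH) (corona_edges EG EH) (Inr (u, x))"
  unfolding simplicial_def
proof (intro allI impI)
  fix a b assume a: "a \<in> corona_vertices VG VH" and b: "b \<in> corona_vertices VG VH"
    and ea: "corona_edges EG EH (Inr (u, x)) a" and eb: "corona_edges EG EH (Inr (u, x)) b"
    and ab: "a \<noteq> b"
  show "corona_edges EG EH a b"
  proof (cases a)
    case (Inl a')
    then show ?thesis using ea eb ab by (cases b) auto
  next
    case (Inr p)
    then obtain a1 a2 where a': "a = Inr (a1, a2)" by (cases p) auto
    show ?thesis
    proof (cases b)
      case (Inl b')
      then show ?thesis using ea eb a' by auto
    next
      case (Inr q)
      then obtain b1 b2 where b': "b = Inr (b1, b2)" by (cases q) auto
      then show ?thesis using ea eb a' ab block_trans[OF dH] by auto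
    qed
  qed
qed

lemma cut_cond:
  "corona_edges EG EH a b \<Longrightarrow> b \<in> {z. \<exists>y. z = Inr (u, y)} \<Longrightarrow> a \<notin> {z. \<exists>y. z = Inr (u, y)} \<Longrightarrow> a = Inl u"
  by (cases a; cases b) auto

lemma Max_card_eq:
  assumes fin: "finite V" and sub: "\<And>S. P S \<Longrightarrow> S \<subseteq> V" and S0: "P S0"
  and bd: "\<And>S. P S \<Longrightarrow> card S \<le> card S0"
  shows "Max {card S | S. P S} = card S0"
proof (rule Max_eqI)
  have "{card S | S. P S} \<subseteq> card ` Pow V" using sub by blast
  then show "finite {card S | S. P S}" using fin by (meson finite_Pow_iff finite_imageI finite_subset)
  show "\<And>y. y \<in> {card S | S. P S} \<Longrightarrow> y \<le> card S0" using bd by blast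
  show "card S0 \<in> {card S | S. P S}" using S0 by blast
qed

lemma inj_bound:
  assumes fG: "finite VG" and fH: "finite VH"
  and S: "S \<subseteq> corona_vertices VG VH"
  and h: "\<And>u. Inl u \<in> S \<Longrightarrow> \<exists>y\<in>VH. Inr (u, y) \<notin> S"
  shows "card S \<le> card (Inr ` (VG \<times> VH) :: ('a + 'a \<times> 'b) set)"
proof -
  define g where "g u = (SOME y. y \<in> VH \<and> Inr (u, y) \<notin> S)" for u
  have g: "Inl u \<in> S \<Longrightarrow> g u \<in> VH \<and> Inr (u, g u) \<notin> S" for u
    unfolding g_def using h[of u] by (metis (mono_tags, lifting) someI_ex)
  define f :: "'a + 'a \<times> 'b \<Rightarrow> 'a + 'a \<times> 'b" where "f = case_sum (\<lambda>u. Inr (u, g u)) Inr"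
  have inj: "inj_on f S"
  proof (rule inj_onI)
    fix a b assume a: "a \<in> S" and b: "b \<in> S" and e: "f a = f b"
    have key: "f (Inl u) \<noteq> f (Inr p)" if "Inl u \<in> S" "Inr p \<in> S" for u p
      using g[OF that(1)] that(2) unfolding f_def by auto
    show "a = b"
    proof (cases a)
      case (Inl u)
      show ?thesis
      proof (cases b)
        case (Inl v) then show ?thesis using e \<open>a = Inl u\<close> unfolding f_def by simp
      next
        case (Inr q) then show ?thesis using e \<open>a = Inl u\<close> key a b by metis
      qed
    next
      case (Inr p)
      show ?thesis
      proof (cases b)
        case (Inl v) then show ?thesis using e \<open>a = Inr p\<close> key a b by metis
      next
        case (Inr q) then show ?thesis using e \<open>a = Inr p\<close> unfolding f_def by simp
      qed
    qed
  qed
  have "f ` S \<subseteq> Inr ` (VG \<times> VH)"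
  proof
    fix z assume "z \<in> f ` S"
    then obtain a where a: "a \<in> S" "z = f a" by blast
    then show "z \<in> Inr ` (VG \<times> VH)"
      using S g unfolding f_def corona_vertices_def by (cases a) auto
  qed
  moreover have "finite (Inr ` (VG \<times> VH) :: ('a + 'a \<times> 'b) set)" using fG fH by simp
  ultimately have "card (f ` S) \<le> card (Inr ` (VG \<times> VH) :: ('a + 'a \<times> 'b) set)" by (rule card_mono[rotated])
  then show ?thesis using card_image[OF inj] by simp
qed

lemma geod3:
  assumes conn: "connected_graph (corona_vertices VG VH) (corona_edges EG EH)"
  and u: "u \<in> VG" and xy: "x \<in> VH" "y \<in> VH" "x \<noteq> y" "\<not> EH x y"
  shows "geodesic (corona_vertices VG VH) (corona_edges EG EH) [Inr (u, x), Inl u, Inr (u, y)]"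
proof -
  let ?V = "corona_vertices VG VH" and ?E = "corona_edges EG EH"
  have w: "walk ?V ?E [Inr (u, x), Inl u, Inr (u, y)]"
    using u xy by (auto simp: walk_Cons_Cons corona_vertices_def)
  have "gdist ?V ?E (Inr (u, x)) (Inr (u, y)) < 3" using gdist_le[OF w, of "Inr (u, x)" "Inr (u, y)"] by simp
  moreover have "\<not> gdist ?V ?E (Inr (u, x)) (Inr (u, y)) \<le> 1"
  proof
    assume "gdist ?V ?E (Inr (u, x)) (Inr (u, y)) \<le> 1"
    moreover have "Inr (u, x) \<in> ?V" "Inr (u, y) \<in> ?V" using u xy by (auto simp: corona_vertices_def)
    ultimately have "Inr (u, x) = Inr (u, y) \<or> ?E (Inr (u, x)) (Inr (u, y))"
      using gdist_le1[OF conn] by blast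
    then show False using xy by auto
  qed
  ultimately have "gdist ?V ?E (Inr (u, x)) (Inr (u, y)) = 2" by simp
  then show ?thesis using w unfolding geodesic_def by simp
qed

lemma nonsingle_witness:
  assumes dH: "disjoint_union_of_complete_graphs VH EH" and sH: "simple_graph VH EH"
  and ns: "\<not> (\<forall>x\<in>VH. \<forall>y\<in>VH. x \<noteq> y \<longrightarrow> EH x y)" and x: "x \<in> VH"
  shows "\<exists>y\<in>VH. y \<noteq> x \<and> \<not> EH x y"
proof (rule ccontr)
  assume c: "\<not> ?thesis"
  obtain y z where yz: "y \<in> VH" "z \<in> VH" "y \<noteq> z" "\<not> EH y z" using ns by blast
  have symH: "\<And>a b. EH a b \<Longrightarrow> EH b a" using sH unfolding simple_graph_def by blast
  have "EH y z"
  proof (cases "y = x")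
    case True then show ?thesis using c yz by auto
  next
    case False
    then have xy: "EH x y" using c yz by blast
    show ?thesis
    proof (cases "z = x")
      case True then show ?thesis using xy symH by blast
    next
      case False
      then have "EH x z" using c yz by blast
      then show ?thesis using block_trans[OF dH xy] yz by blast
    qed
  qed
  then show False using yz by blast
qed

lemma G_neighbor:
  assumes cG: "connected_graph VG EG" and "u \<in> VG" "v \<in> VG" "u \<noteq> v"
  shows "\<exists>w\<in>VG. EG u w"
proof -
  obtain xs where xs: "walk VG EG xs" "hd xs = u" "last xs = v"
    using cG assms unfolding connected_graph_def by blast
  obtain a ys where "xs = a # ys" using xs walk_nonempty by (cases xs) auto
  moreover then obtain b zs where "ys = b # zs" using xs assms by (cases ys) auto
  ultimately have "EG u b" "walk VG EG (b # zs)" using xs by (auto simp: walk_Cons_Cons)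
  then show ?thesis unfolding walk_def by auto
qed



theorem proposition3p2:
  fixes VG :: "'a set" and EG :: "'a \<Rightarrow> 'a \<Rightarrow> bool"
    and VH :: "'b set" and EH :: "'b \<Rightarrow> 'b \<Rightarrow> bool"
  assumes "simple_graph VG EG" and "connected_graph VG EG"
    and "simple_graph VH EH" and "disjoint_union_of_complete_graphs VH EH"
  shows "gp_number (corona_vertices VG VH) (corona_edges EG EH)
       = clique_number (corona_vertices VG VH)
           (strong_resolving_edges (corona_vertices VG VH) (corona_edges EG EH))"
proof -
  note sG = assms(1) and cG = assms(2) and sH = assms(3) and dH = assms(4)
  let ?V = "corona_vertices VG VH" and ?E = "corona_edges EG EH"
  let ?SR = "strong_resolving_edges ?V ?E"
  let ?R = "Inr ` (VG \<times> VH) :: ('a + 'a \<times> 'b) set"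
  have sym: "\<And>a b. ?E a b \<Longrightarrow> ?E b a" using corona_sym[OF sG sH] .
  have conn: "connected_graph ?V ?E" using corona_conn[OF sG sH cG] .
  have fG: "finite VG" using sG unfolding simple_graph_def by simp
  have fH: "finite VH" using sH unfolding simple_graph_def by simp
  have finV: "finite ?V" using fG fH unfolding corona_vertices_def by simp
  have VGne: "VG \<noteq> {}" using cG unfolding connected_graph_def by simp
  have VHne: "VH \<noteq> {}" using dH unfolding disjoint_union_of_complete_graphs_def by simp
  have RV: "?R \<subseteq> ?V" unfolding corona_vertices_def by auto
  have finR: "finite ?R" using fG fH by simp
  have cardR: "card ?R = card VG * card VH"
    by (simp add: card_image card_cartesian_product)
  have Rsimp: "\<And>z. z \<in> ?R \<Longrightarrow> simplicial ?V ?E z" using Inr_simplicial[OF dH] by auto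
  have gp_sub: "\<And>S. gp_set ?V ?E S \<Longrightarrow> S \<subseteq> ?V" by (simp add: gp_set_def)
  have cl_sub: "\<And>S. clique ?V ?SR S \<Longrightarrow> S \<subseteq> ?V" by (simp add: clique_def)
  have md_simp: "?SR a b" if "a \<in> ?V" "b \<in> ?V" "a \<noteq> b" "simplicial ?V ?E a" "simplicial ?V ?E b" for a b
    unfolding strong_resolving_edges_def mutually_maximally_distant_def
    using simplicial_md[where E="?E", OF sym conn] that by blast
  have gp_simp: "gp_set ?V ?E S" if "S \<subseteq> ?V" "\<forall>z\<in>S. simplicial ?V ?E z" for S
    unfolding gp_set_def
  proof (intro conjI ballI impI notI)
    show "S \<subseteq> ?V" using that by simp
    fix u v w assume uvw: "u \<in> S" "v \<in> S" "w \<in> S" and d: "u \<noteq> v \<and> u \<noteq> w \<and> v \<noteq> w"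
      and ex: "\<exists>xs. geodesic ?V ?E xs \<and> u \<in> set xs \<and> v \<in> set xs \<and> w \<in> set xs"
    then obtain xs where xs: "geodesic ?V ?E xs" "u \<in> set xs" "v \<in> set xs" "w \<in> set xs" by blast
    show False using three_simplicial[where E="?E", OF sym xs] d uvw that by blast
  qed
  have cl_simp: "clique ?V ?SR S" if "S \<subseteq> ?V" "\<forall>z\<in>S. simplicial ?V ?E z" for S
    unfolding clique_def using md_simp that by blast
  show ?thesis
  proof (cases "(\<exists>g. VG = {g}) \<and> (\<forall>x\<in>VH. \<forall>y\<in>VH. x \<noteq> y \<longrightarrow> EH x y)")
    case True
    then obtain g where g: "VG = {g}" and single: "\<forall>x\<in>VH. \<forall>y\<in>VH. x \<noteq> y \<longrightarrow> EH x y" by blast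
    have form: "a = Inl g \<or> (\<exists>x\<in>VH. a = Inr (g, x))" if "a \<in> ?V" for a
      using that g unfolding corona_vertices_def by auto
    have Vcl: "?E a b" if "a \<in> ?V" "b \<in> ?V" "a \<noteq> b" for a b
      using form[OF that(1)] form[OF that(2)] that(3) single by (auto; metis)
    have allsimp: "\<forall>z\<in>?V. simplicial ?V ?E z" unfolding simplicial_def using Vcl by blast
    have "gp_number ?V ?E = card ?V" unfolding gp_number_def
    proof (rule Max_card_eq[where P="gp_set ?V ?E", OF finV])
      show "\<And>S. gp_set ?V ?E S \<Longrightarrow> S \<subseteq> ?V" by (rule gp_sub)
      show "gp_set ?V ?E ?V" by (rule gp_simp[OF subset_refl allsimp])
      show "\<And>S. gp_set ?V ?E S \<Longrightarrow> card S \<le> card ?V" using card_mono[OF finV] gp_sub by blast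
    qed
    moreover have "clique_number ?V ?SR = card ?V" unfolding clique_number_def
    proof (rule Max_card_eq[where P="clique ?V ?SR", OF finV])
      show "\<And>S. clique ?V ?SR S \<Longrightarrow> S \<subseteq> ?V" by (rule cl_sub)
      show "clique ?V ?SR ?V" by (rule cl_simp[OF subset_refl allsimp])
      show "\<And>S. clique ?V ?SR S \<Longrightarrow> card S \<le> card ?V" using card_mono[OF finV] cl_sub by blast
    qed
    ultimately show ?thesis by simp
  next
    case False
    have nsingle: "\<not> (\<forall>x\<in>VH. \<forall>y\<in>VH. x \<noteq> y \<longrightarrow> EH x y)" if "u \<in> VG" "\<forall>v\<in>VG. v = u" for u
    proof -
      have "VG = {u}" using that by blast
      then show ?thesis using False by blast
    qed
    have inV: "u \<in> VG" if "Inl u \<in> ?V" for u using that unfolding corona_vertices_def by auto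
    have inV2: "u \<in> VG \<and> x \<in> VH" if "Inr (u, x) \<in> ?V" for u x using that unfolding corona_vertices_def by auto
    have gpb: "card S \<le> card ?R" if S: "gp_set ?V ?E S" for S
    proof -
      have SV: "S \<subseteq> ?V" using S gp_sub by blast
      have nogeo: False if "a \<in> S" "b \<in> S" "c \<in> S" "a \<noteq> b" "a \<noteq> c" "b \<noteq> c"
        "geodesic ?V ?E xs" "a \<in> set xs" "b \<in> set xs" "c \<in> set xs" for a b c xs
        using S that unfolding gp_set_def by blast
      show ?thesis
      proof (cases "\<exists>u x v. Inl u \<in> S \<and> Inr (u, x) \<in> S \<and> v \<in> VG \<and> v \<noteq> u")
        case True
        then obtain u x v where uxv: "Inl u \<in> S" "Inr (u, x) \<in> S" "v \<in> VG" "v \<noteq> u" by blast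
        have u: "u \<in> VG" and x: "x \<in> VH" using uxv SV inV inV2 by blast+
        let ?A = "{z. \<exists>y. z = Inr (u, y)}"
        have uV: "Inl u \<in> ?V" and zV: "Inr (u, x) \<in> ?V" using uxv SV by auto
        have sub: "S \<subseteq> insert (Inl u) (Inr ` ({u} \<times> VH))"
        proof
          fix w assume w: "w \<in> S"
          show "w \<in> insert (Inl u) (Inr ` ({u} \<times> VH))"
          proof (rule ccontr)
            assume nw: "w \<notin> insert (Inl u) (Inr ` ({u} \<times> VH))"
            have wV: "w \<in> ?V" using SV w by blast
            have wA: "w \<notin> ?A"
            proof
              assume "w \<in> ?A"
              then obtain y where "w = Inr (u, y)" by blast
              then show False using nw wV inV2 by auto
            qed
            have cg: "\<And>a b. ?E a b \<Longrightarrow> b \<in> ?A \<Longrightarrow> a \<notin> ?A \<Longrightarrow> a = Inl u" by (rule cut_cond)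
            have zA': "Inr (u, x) \<in> ?A" by blast
            have ec: "?E (Inl u) (Inr (u, x))" by simp
            have "\<exists>xs. geodesic ?V ?E xs \<and> w \<in> set xs \<and> Inl u \<in> set xs \<and> Inr (u, x) \<in> set xs"
              using cg conn wV wA zV zA' uV ec by (rule cut_geod[where E="?E" and A="?A" and c="Inl u"])
            then obtain xs where "geodesic ?V ?E xs" "w \<in> set xs" "Inl u \<in> set xs" "Inr (u, x) \<in> set xs"
              by blast
            moreover have "w \<noteq> Inl u" "w \<noteq> Inr (u, x)" using nw u x by auto
            ultimately show False using nogeo[of w "Inl u" "Inr (u, x)"] w uxv by auto
          qed
        qed
        have finI: "finite (insert (Inl u) (Inr ` ({u} \<times> VH)) :: ('a + 'a \<times> 'b) set)" using fH by simp
        have "card S \<le> card (insert (Inl u) (Inr ` ({u} \<times> VH)) :: ('a + 'a \<times> 'b) set)"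
          by (rule card_mono[OF finI sub])
        also have "\<dots> \<le> Suc (card (Inr ` ({u} \<times> VH) :: ('a + 'a \<times> 'b) set))"
          using fH by (simp add: card_insert_if)
        also have "card (Inr ` ({u} \<times> VH) :: ('a + 'a \<times> 'b) set) = card VH"
          by (simp add: card_image card_cartesian_product)
        also have "Suc (card VH) \<le> 2 * card VH" using VHne fH by (simp add: Suc_le_eq card_gt_0_iff)
        also have "2 * card VH \<le> card VG * card VH"
        proof -
          have "card {u, v} \<le> card VG" using u uxv fG by (intro card_mono) auto
          then have "2 \<le> card VG" using uxv by simp
          then show ?thesis by simp
        qed
        finally show ?thesis using cardR by simp
      next
        case False
        show ?thesis
        proof (rule inj_bound[OF fG fH SV])
          fix u assume uS: "Inl u \<in> S"
          have u: "u \<in> VG" using uS SV inV by blast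
          show "\<exists>y\<in>VH. Inr (u, y) \<notin> S"
          proof (rule ccontr)
            assume "\<not> (\<exists>y\<in>VH. Inr (u, y) \<notin> S)"
            then have all: "\<forall>y\<in>VH. Inr (u, y) \<in> S" by blast
            obtain x where x: "x \<in> VH" using VHne by blast
            have "\<forall>v\<in>VG. v = u" using False uS all x by blast
            then have ns: "\<not> (\<forall>x\<in>VH. \<forall>y\<in>VH. x \<noteq> y \<longrightarrow> EH x y)" using nsingle u by blast
            obtain y where y: "y \<in> VH" "y \<noteq> x" "\<not> EH x y"
              using nonsingle_witness[OF dH sH ns x] by blast
            have "geodesic ?V ?E [Inr (u, x), Inl u, Inr (u, y)]"
              using geod3[OF conn u x y(1)] y by auto
            then show False using nogeo[of "Inr (u, x)" "Inl u" "Inr (u, y)" "[Inr (u, x), Inl u, Inr (u, y)]"] all uS x y by auto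
          qed
        qed
      qed
    qed
    have clb: "card K \<le> card ?R" if K: "clique ?V ?SR K" for K
    proof (cases "K \<subseteq> ?R")
      case True then show ?thesis using card_mono[OF finR] by blast
    next
      case False
      then obtain a where a: "a \<in> K" "a \<notin> ?R" by blast
      have KV: "K \<subseteq> ?V" using K cl_sub by blast
      have aV: "a \<in> ?V" using a KV by blast
      then have "a \<in> Inl ` VG \<or> a \<in> Inr ` (VG \<times> VH)" unfolding corona_vertices_def by blast
      then have "a \<in> Inl ` VG" using a(2) by blast
      then obtain u where au: "a = Inl u" and u: "u \<in> VG" by blast
      have fK: "finite K" using KV finV finite_subset by blast
      show ?thesis
      proof (cases "K \<subseteq> {a}")
        case True
        then have "card K \<le> 1" using card_mono[of "{a}" K] by simp
        moreover have "card ?R \<ge> 1" using finR VGne VHne by (simp add: Suc_le_eq card_gt_0_iff)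
        ultimately show ?thesis by simp
      next
        case False
        then obtain z where z: "z \<in> K" "z \<noteq> a" by blast
        have cl: "\<forall>p\<in>K. \<forall>q\<in>K. p \<noteq> q \<longrightarrow> ?SR p q" using K unfolding clique_def by (rule conjunct2)
        have "a \<noteq> z \<longrightarrow> ?SR a z" using bspec[OF bspec[OF cl a(1)] z(1)] .
        then have "?SR a z" using z(2) by metis
        then have "maximally_distant ?V ?E a z"
          unfolding strong_resolving_edges_def mutually_maximally_distant_def by (metis conjunct1 conjunct2)
        then have "\<forall>w\<in>?V. ?E a w \<longrightarrow> gdist ?V ?E z w \<le> gdist ?V ?E a z"
          unfolding maximally_distant_def by (metis conjunct2)
        then have md: "\<forall>w\<in>?V. ?E (Inl u) w \<longrightarrow> gdist ?V ?E z w \<le> gdist ?V ?E (Inl u) z"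
          using au by simp
        have zV: "z \<in> ?V" using z KV by blast
        have uV: "Inl u \<in> ?V" using u unfolding corona_vertices_def by simp
        show ?thesis
        proof (cases "\<exists>x. z = Inr (u, x)")
          case True
          then obtain x where zx: "z = Inr (u, x)" by blast
          have x: "x \<in> VH" using zV zx inV2 by blast
          have "walk ?V ?E [Inl u, z]" using uV zV zx by (simp add: walk_Cons_Cons)
          then have d1: "gdist ?V ?E (Inl u) z \<le> 1"
            using gdist_le[of ?V ?E "[Inl u, z]" "Inl u" z] by simp
          show ?thesis
          proof (cases "\<exists>v\<in>VG. v \<noteq> u")
            case True
            then obtain v where "v \<in> VG" "v \<noteq> u" by blast
            then obtain v' where v': "v' \<in> VG" "EG u v'" using G_neighbor[OF cG u] by blast
            have "u \<noteq> v'" using v' sG unfolding simple_graph_def by blast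
            have vV: "Inl v' \<in> ?V" using v' unfolding corona_vertices_def by simp
            have "?E (Inl u) (Inl v')" using v' by simp
            then have "gdist ?V ?E z (Inl v') \<le> gdist ?V ?E (Inl u) z" using md vV by blast
            then have "gdist ?V ?E z (Inl v') \<le> 1" using d1 by linarith
            then have "z = Inl v' \<or> ?E z (Inl v')" using gdist_le1[OF conn zV vV] by blast
            then show ?thesis using zx \<open>u \<noteq> v'\<close> by auto
          next
            case False
            then have ns: "\<not> (\<forall>x\<in>VH. \<forall>y\<in>VH. x \<noteq> y \<longrightarrow> EH x y)" using nsingle u by blast
            obtain y where y: "y \<in> VH" "y \<noteq> x" "\<not> EH x y"
              using nonsingle_witness[OF dH sH ns x] by blast
            have yV: "Inr (u, y) \<in> ?V" using u y unfolding corona_vertices_def by simp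
            have "?E (Inl u) (Inr (u, y))" by simp
            then have "gdist ?V ?E z (Inr (u, y)) \<le> gdist ?V ?E (Inl u) z" using md yV by blast
            then have "gdist ?V ?E z (Inr (u, y)) \<le> 1" using d1 by linarith
            then have "z = Inr (u, y) \<or> ?E z (Inr (u, y))" using gdist_le1[OF conn zV yV] by blast
            then show ?thesis using zx y by auto
          qed
        next
          case False
          let ?A = "{z. \<exists>y. z = Inr (u, y)}"
          have zA: "z \<notin> ?A" using False by blast
          obtain x0 where x0: "x0 \<in> VH" using VHne by blast
          have x0V: "Inr (u, x0) \<in> ?V" using u x0 unfolding corona_vertices_def by simp
          have x0A: "Inr (u, x0) \<in> ?A" by blast
          have cg: "\<And>a b. ?E a b \<Longrightarrow> b \<in> ?A \<Longrightarrow> a \<notin> ?A \<Longrightarrow> a = Inl u" by (rule cut_cond)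
          have "Suc (gdist ?V ?E z (Inl u)) \<le> gdist ?V ?E z (Inr (u, x0))"
            using cg conn zV zA x0V x0A by (rule cut_dist[where E="?E" and A="?A" and c="Inl u"])
          moreover have "gdist ?V ?E z (Inr (u, x0)) \<le> gdist ?V ?E (Inl u) z" using md x0V by auto
          moreover have "gdist ?V ?E (Inl u) z = gdist ?V ?E z (Inl u)"
            using gdist_sym[where E="?E", OF sym conn uV zV] .
          ultimately show ?thesis by simp
        qed
      qed
    qed
    have "gp_number ?V ?E = card ?R" unfolding gp_number_def
    proof (rule Max_card_eq[where P="gp_set ?V ?E", OF finV])
      show "\<And>S. gp_set ?V ?E S \<Longrightarrow> S \<subseteq> ?V" by (rule gp_sub)
      show "gp_set ?V ?E ?R" using gp_simp[OF RV] Rsimp by blast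
      show "\<And>S. gp_set ?V ?E S \<Longrightarrow> card S \<le> card ?R" by (rule gpb)
    qed
    moreover have "clique_number ?V ?SR = card ?R" unfolding clique_number_def
    proof (rule Max_card_eq[where P="clique ?V ?SR", OF finV])
      show "\<And>S. clique ?V ?SR S \<Longrightarrow> S \<subseteq> ?V" by (rule cl_sub)
      show "clique ?V ?SR ?R" using cl_simp[OF RV] Rsimp by blast
      show "\<And>S. clique ?V ?SR S \<Longrightarrow> card S \<le> card ?R" by (rule clb)
    qed
    ultimately show ?thesis by simp
  qed
qed

end
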